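(* In the standing setting, for all $t\in\{1,\dots,\overline R\}$, $k\in\{0,\dots,m\}$ and $\delta\in\{0,\dots,N\}$, $$\varphi^v(t,k,\delta)\le v\big(\sigma^v(t-1)\wedge k\big)-\big(\sigma^v(t-1)\wedge k\big)\,p_{t-1}.$$
   Context: Standing setting. Integers $n\ge2$, $m\ge1$; $N:=(n-1)m$. Reals $p_{\mathrm{init}}\ge0$, $\Delta P>0$; the price at round $t\ge0$ is $p_t:=p_{\mathrm{init}}+t\Delta P$. The player's valuation $v:\{0,\dots,m\}\to[0,\infty)$ satisfies $v(0)=0$ and is non-decreasing and concave. $\overline R:=\lceil (v(1)-p_{\mathrm{init}})/\Delta P\rceil$, assumed $\ge1$. For $t\ge0$, $\sigma^v(t):=\min\operatorname{argmax}_{0\le u\le m}(v(u)-up_t)$. The opponent is given by random variables $Z_1\ge Z_2\ge\dots\ge Z_N\ge0$ (a.s.) on a probability space $(\Omega,\mathcal F,\mathbb P)$; its demand at price $p$ is $\delta(p):=\sum_{j=1}^N\mathbf 1\{Z_j>p\}$. For $t\ge1$ fix transition kernels $K_t(\delta'\mid\delta)$ ($\delta,\delta'\in\{0,\dots,N\}$), each $K_t(\cdot\mid\delta)$ a probability on $\{0,\dots,\delta\}$, with $K_t(\delta'\mid\delta)=\mathbb P(\delta(p_t)=\delta'\mid\delta(p_{t-1})=\delta)$ whenever $\mathbb P(\delta(p_{t-1})=\delta)>0$. Value function: for $t\in\{1,\dots,\overline R\}$, $k\in\{0,\dots,m\}$, $\delta\in\{0,\dots,N\}$: $\varphi^v(t,k,\delta):=v(k)-kp_{t-1}$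 if $k+\delta\le m$; $:=\max_{0\le u\le k}\sum_{\delta'=0}^N K_t(\delta'\mid\delta)\varphi^v(t+1,u,\delta')$ if $k+\delta>m$ and $t<\overline R$; $:=0$ if $k+\delta>m$ and $t=\overline R$. $a\wedge b:=\min(a,b)$. *)

theory Defs
  imports "HOL-Probability.Probability"
begin

definition price :: "real \<Rightarrow> real \<Rightarrow> nat \<Rightarrow> real" where
  "price pinit dP t = pinit + real t * dP"

definition concave_on_upto :: "nat \<Rightarrow> (nat \<Rightarrow> real) \<Rightarrow> bool" where
  "concave_on_upto m v \<longleftrightarrow> (\<forall>u. 1 \<le> u \<and> u + 1 \<le> m \<longrightarrow> v (u+1) - v u \<le> v u - v (u-1))"

definition Rbar :: "(nat \<Rightarrow> real) \<Rightarrow> real \<Rightarrow> real \<Rightarrow> int" where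
  "Rbar v pinit dP = \<lceil>(v 1 - pinit) / dP\<rceil>"

definition sigma :: "nat \<Rightarrow> (nat \<Rightarrow> real) \<Rightarrow> real \<Rightarrow> real \<Rightarrow> nat \<Rightarrow> nat" where
  "sigma m v pinit dP t =
     (LEAST u. u \<le> m \<and> (\<forall>w\<le>m. v w - real w * price pinit dP t \<le> v u - real u * price pinit dP t))"

definition demand :: "nat \<Rightarrow> (nat \<Rightarrow> 'a \<Rightarrow> real) \<Rightarrow> 'a \<Rightarrow> real \<Rightarrow> nat" where
  "demand N Z \<omega> p = card {j \<in> {1..N}. Z j \<omega> > p}"

text \<open>Auxiliary recursion for the value function, indexed by the remaining
  number of rounds d = Rbar - t. K t d' d stands for K_t(d' | d).\<close>
primrec phiR :: "nat \<Rightarrow> nat \<Rightarrow> (nat \<Rightarrow> real) \<Rightarrow> real \<Rightarrow> real \<Rightarrow> (nat \<Rightarrow> nat \<Rightarrow> nat \<Rightarrow> real)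
                  \<Rightarrow> nat \<Rightarrow> nat \<Rightarrow> nat \<Rightarrow> nat \<Rightarrow> real" where
  "phiR m N v pinit dP K 0 t k d =
     (if k + d \<le> m then v k - real k * price pinit dP (t - 1) else 0)"
| "phiR m N v pinit dP K (Suc r) t k d =
     (if k + d \<le> m then v k - real k * price pinit dP (t - 1)
      else Max ((\<lambda>u. \<Sum>d'\<in>{0..N}. K t d' d * phiR m N v pinit dP K r (t+1) u d') ` {0..k}))"

definition phi :: "nat \<Rightarrow> nat \<Rightarrow> (nat \<Rightarrow> real) \<Rightarrow> real \<Rightarrow> real \<Rightarrow> (nat \<Rightarrow> nat \<Rightarrow> nat \<Rightarrow> real)
                  \<Rightarrow> nat \<Rightarrow> nat \<Rightarrow> nat \<Rightarrow> real" where
  "phi m N v pinit dP K t k d = phiR m N v pinit dP K (nat (Rbar v pinit dP) - t) t k d"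

end

theory Submission
  imports Defs
begin

definition GG :: "(nat \<Rightarrow> real) \<Rightarrow> real \<Rightarrow> real \<Rightarrow> nat \<Rightarrow> nat \<Rightarrow> real" where
  "GG v pinit dP s k = Max ((\<lambda>u. v u - real u * price pinit dP s) ` {0..k})"

lemma GG_ge: "u \<le> k \<Longrightarrow> v u - real u * price pinit dP s \<le> GG v pinit dP s k"
  unfolding GG_def by (intro Max_ge) auto

lemma GG_mono_s:
  assumes "dP > 0" "s \<le> s'"
  shows "GG v pinit dP s' k \<le> GG v pinit dP s k"
proof -
  have "GG v pinit dP s' k \<in> (\<lambda>u. v u - real u * price pinit dP s') ` {0..k}"
    unfolding GG_def by (intro Max_in) auto
  then obtain u where u: "u \<le> k" "GG v pinit dP s' k = v u - real u * price pinit dP s'" by auto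
  have "price pinit dP s \<le> price pinit dP s'" using assms unfolding price_def by simp
  hence "real u * price pinit dP s \<le> real u * price pinit dP s'" by (simp add: mult_left_mono)
  hence "GG v pinit dP s' k \<le> v u - real u * price pinit dP s" using u by simp
  also have "\<dots> \<le> GG v pinit dP s k" using u by (intro GG_ge)
  finally show ?thesis .
qed

lemma GG_mono_k: "k \<le> k' \<Longrightarrow> GG v pinit dP s k \<le> GG v pinit dP s k'"
  unfolding GG_def by (intro Max_mono) auto

lemma bound:
  assumes dP: "dP > 0" and v0: "v 0 = 0"
    and K_nonneg: "\<forall>s\<ge>1. \<forall>d1\<le>N. \<forall>d2. K s d2 d1 \<ge> 0"
    and K_supp: "\<forall>s\<ge>1. \<forall>d1\<le>N. \<forall>d2. d2 > d1 \<longrightarrow> K s d2 d1 = 0"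
    and K_sum: "\<forall>s\<ge>1. \<forall>d1\<le>N. (\<Sum>d2\<in>{0..d1}. K s d2 d1) = 1"
  shows "1 \<le> t \<Longrightarrow> d \<le> N \<Longrightarrow> phiR m N v pinit dP K r t k d \<le> GG v pinit dP (t-1) k"
proof (induction r arbitrary: t k d)
  case 0
  have g0: "v 0 - real 0 * price pinit dP (t-1) \<le> GG v pinit dP (t-1) k" by (rule GG_ge) simp
  show ?case using GG_ge[of k k v pinit dP "t-1"] g0 v0 by auto
next
  case (Suc r)
  show ?case
  proof (cases "k + d \<le> m")
    case True then show ?thesis using GG_ge[of k k v pinit dP "t-1"] by simp
  next
    case False
    have sumN: "(\<Sum>d'\<in>{0..N}. K t d' d) = 1"
    proof -
      have "{0..N} = {0..d} \<union> {d<..N}" using Suc.prems by auto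
      hence "(\<Sum>d'\<in>{0..N}. K t d' d) = (\<Sum>d'\<in>{0..d}. K t d' d) + (\<Sum>d'\<in>{d<..N}. K t d' d)"
        by (simp add: sum.union_disjoint[symmetric] ivl_disj_int)
      also have "(\<Sum>d'\<in>{d<..N}. K t d' d) = 0" using K_supp Suc.prems by (intro sum.neutral) auto
      finally show ?thesis using K_sum Suc.prems by simp
    qed
    have each: "(\<Sum>d'\<in>{0..N}. K t d' d * phiR m N v pinit dP K r (t+1) u d') \<le> GG v pinit dP (t-1) k"
      if u: "u \<in> {0..k}" for u
    proof -
      have "(\<Sum>d'\<in>{0..N}. K t d' d * phiR m N v pinit dP K r (t+1) u d')
            \<le> (\<Sum>d'\<in>{0..N}. K t d' d * GG v pinit dP t u)"
      proof (rule sum_mono)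
        fix d' assume "d' \<in> {0..N}"
        hence "phiR m N v pinit dP K r (t+1) u d' \<le> GG v pinit dP (t+1-1) u"
          by (intro Suc.IH) auto
        moreover have "K t d' d \<ge> 0" using K_nonneg Suc.prems by auto
        ultimately show "K t d' d * phiR m N v pinit dP K r (t+1) u d' \<le> K t d' d * GG v pinit dP t u"
          by (simp add: mult_left_mono)
      qed
      also have "\<dots> = GG v pinit dP t u" using sumN by (simp add: sum_distrib_right[symmetric])
      also have "\<dots> \<le> GG v pinit dP (t-1) u" by (rule GG_mono_s[OF dP]) simp
      also have "\<dots> \<le> GG v pinit dP (t-1) k" using u by (intro GG_mono_k) simp
      finally show ?thesis .
    qed
    show ?thesis using False each
      by (simp del: phiR.simps add: phiR.simps(2))
  qed
qed


lemma conc_chain: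
  assumes c: "concave_on_upto m v"
  shows "w \<le> w' \<Longrightarrow> w' + 1 \<le> m \<Longrightarrow> v (w'+1) - v w' \<le> v (w+1) - v w"
proof (induction w')
  case 0 then show ?case by simp
next
  case (Suc w')
  show ?case
  proof (cases "w = Suc w'")
    case True then show ?thesis by simp
  next
    case False
    hence "w \<le> w'" using Suc.prems by simp
    hence ih: "v (w'+1) - v w' \<le> v (w+1) - v w" using Suc by simp
    have "v (Suc w' + 1) - v (Suc w') \<le> v (Suc w') - v (Suc w' - 1)"
    proof -
      have "1 \<le> Suc w' \<and> Suc w' + 1 \<le> m" using Suc.prems by simp
      thus ?thesis using c unfolding concave_on_upto_def by blast
    qed
    then show ?thesis using ih by simp
  qed
qed

lemma sigma_bound:
  assumes c: "concave_on_upto m v" and k: "k \<le> m"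
  shows "GG v pinit dP T k \<le> v (min (sigma m v pinit dP T) k)
           - real (min (sigma m v pinit dP T) k) * price pinit dP T"
proof -
  define g where "g u = v u - real u * price pinit dP T" for u
  define P where "P u = (u \<le> m \<and> (\<forall>w\<le>m. g w \<le> g u))" for u
  have sdef: "sigma m v pinit dP T = (LEAST u. P u)" unfolding sigma_def P_def g_def by simp
  define s where "s = sigma m v pinit dP T"
  have "Max (g ` {0..m}) \<in> g ` {0..m}" by (intro Max_in) auto
  then obtain u0 where "u0 \<in> {0..m}" "g u0 = Max (g ` {0..m})" by (metis imageE)
  hence "u0 \<le> m" "g u0 = Max (g ` {0..m})" by auto
  hence "P u0" unfolding P_def by (auto intro!: Max_ge)
  hence Ps: "P s" unfolding s_def sdef by (rule LeastI)
  have notP: "\<not> P j" if "j < s" for j using that not_less_Least unfolding s_def sdef by blast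
  have key: "g u \<le> g (min s k)" if u: "u \<le> k" for u
  proof (cases "s \<le> k")
    case True then show ?thesis using Ps u k unfolding P_def by auto
  next
    case False
    hence s1: "s \<ge> 1" by simp
    have "\<not> P (s-1)" using notP s1 by simp
    hence "g (s-1) < g s" using Ps unfolding P_def by force
    hence pos: "v s - v (s-1) - price pinit dP T > 0" unfolding g_def using s1
      by (simp add: of_nat_diff algebra_simps)
    have inc: "g w \<le> g (w+1)" if "w < s" for w
    proof -
      have "v (s-1+1) - v (s-1) \<le> v (w+1) - v w"
        using conc_chain[OF c, of w "s-1"] that Ps unfolding P_def by simp
      hence "v (w+1) - v w - price pinit dP T > 0" using pos s1 by simp
      thus ?thesis unfolding g_def by (simp add: algebra_simps)
    qed
    have "g u \<le> g (u + j)" if "u + j \<le> k" for j using that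
    proof (induction j)
      case 0 then show ?case by simp
    next
      case (Suc j)
      have "g (u+j) \<le> g (u+j+1)" using inc Suc.prems False by simp
      then show ?case using Suc by simp
    qed
    from this[of "k-u"] u False show ?thesis by simp
  qed
  show ?thesis unfolding GG_def
    using key unfolding g_def s_def by (intro Max.boundedI) auto
qed

theorem mainTheorem9:
  fixes n m N :: nat and pinit dP :: real and v :: "nat \<Rightarrow> real"
    and M :: "'a measure" and Z :: "nat \<Rightarrow> 'a \<Rightarrow> real"
    and K :: "nat \<Rightarrow> nat \<Rightarrow> nat \<Rightarrow> real"
    and t k d :: nat
  assumes n2: "n \<ge> 2" and m1: "m \<ge> 1" and N_def: "N = (n - 1) * m"
    and pinit: "pinit \<ge> 0" and dP: "dP > 0"
    and v0: "v 0 = 0"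
    and v_nonneg: "\<forall>u\<le>m. v u \<ge> 0"
    and v_mono: "\<forall>u w. u \<le> w \<and> w \<le> m \<longrightarrow> v u \<le> v w"
    and v_concave: "concave_on_upto m v"
    and R1: "Rbar v pinit dP \<ge> 1"
    and M: "prob_space M"
    and Z_meas: "\<forall>j\<in>{1..N}. Z j \<in> borel_measurable M"
    and Z_ord: "AE \<omega> in M. (\<forall>j\<in>{1..<N}. Z (j+1) \<omega> \<le> Z j \<omega>) \<and> (\<forall>j\<in>{1..N}. Z j \<omega> \<ge> 0)"
    and K_nonneg: "\<forall>s\<ge>1. \<forall>d1\<le>N. \<forall>d2. K s d2 d1 \<ge> 0"
    and K_supp: "\<forall>s\<ge>1. \<forall>d1\<le>N. \<forall>d2. d2 > d1 \<longrightarrow> K s d2 d1 = 0"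
    and K_sum: "\<forall>s\<ge>1. \<forall>d1\<le>N. (\<Sum>d2\<in>{0..d1}. K s d2 d1) = 1"
    and K_cond: "\<forall>s\<ge>1. \<forall>d1\<le>N. \<forall>d2\<le>N.
        measure M {\<omega>\<in>space M. demand N Z \<omega> (price pinit dP (s-1)) = d1} > 0 \<longrightarrow>
        K s d2 d1 =
          measure M {\<omega>\<in>space M. demand N Z \<omega> (price pinit dP s) = d2
                                \<and> demand N Z \<omega> (price pinit dP (s-1)) = d1}
          / measure M {\<omega>\<in>space M. demand N Z \<omega> (price pinit dP (s-1)) = d1}"
    and t: "1 \<le> t" "int t \<le> Rbar v pinit dP" and k: "k \<le> m" and d: "d \<le> N"
  shows "phi m N v pinit dP K t k d
         \<le> v (min (sigma m v pinit dP (t-1)) k)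
           - real (min (sigma m v pinit dP (t-1)) k) * price pinit dP (t-1)"
proof -
  have "phi m N v pinit dP K t k d \<le> GG v pinit dP (t-1) k"
    unfolding phi_def using bound[of dP v N K t d m pinit "nat (Rbar v pinit dP) - t" k] dP v0 K_nonneg K_supp K_sum t d by blast
  also have "\<dots> \<le> v (min (sigma m v pinit dP (t-1)) k)
           - real (min (sigma m v pinit dP (t-1)) k) * price pinit dP (t-1)" by (rule sigma_bound[OF v_concave k])
  finally show ?thesis .
qed

end
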